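(* Let $\mathcal H$ be an $n$-dimensional (real or complex) inner product space, $P:\mathcal H\to\mathcal H$ a linear projection ($P^2=P$) and $Q=I-P$. Let $r_0$ and $r_1$ be the multiplicities of the eigenvalues $0$ and $1$ of $P^\dagger P$ (zero if not an eigenvalue). Then $Q^\dagger Q$ has eigenvalue $0$ with multiplicity $n-r_0$ and eigenvalue $1$ with multiplicity $2r_0+r_1-n$.
   Context: $P^\dagger$, $Q^\dagger$ denote adjoints with respect to the inner product; $P$ need not be an orthogonal projection; $I$ is the identity. Multiplicities are those of eigenvalues of the self-adjoint positive semidefinite operators $P^\dagger P$, $Q^\dagger Q$. *)

theory Defs
  imports "Jordan_Normal_Form.Schur_Decomposition" "Jordan_Normal_Form.Char_Poly"
begin

text \<open>Operators on an n-dimensional inner product space are represented by their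
 n x n matrices w.r.t. an orthonormal basis; the adjoint is then the conjugate
 transpose (mat_adjoint).\<close>

definition eig_mult :: "'a :: field mat \<Rightarrow> 'a \<Rightarrow> nat" where
  "eig_mult A a = order a (char_poly A)"

end

theory Submission
  imports Defs Jordan_Normal_Form.Jordan_Normal_Form_Uniqueness Jordan_Normal_Form.DL_Rank Jordan_Normal_Form.Jordan_Normal_Form_Existence
begin

lemma adj_dims[simp]: "dim_row (mat_adjoint A) = dim_col A" "dim_col (mat_adjoint A) = dim_row A"
  unfolding mat_adjoint_def by (auto simp: mat_of_rows_def)

lemma adj_carrier[simp]: "A \<in> carrier_mat n m \<Longrightarrow> mat_adjoint A \<in> carrier_mat m n"
  by auto

lemma adj_index'[simp]: "i < dim_col A \<Longrightarrow> j < dim_row A \<Longrightarrow>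
   mat_adjoint A $$ (i,j) = conjugate (A $$ (j,i))"
  unfolding mat_adjoint_def by (auto simp: mat_of_rows_def cols_def)

lemma adj_index: "A \<in> carrier_mat n m \<Longrightarrow> i < m \<Longrightarrow> j < n \<Longrightarrow>
   mat_adjoint A $$ (i,j) = conjugate (A $$ (j,i))"
  by auto

lemma adj_mult:
  fixes A :: "'a::conjugatable_field mat"
  assumes A: "A \<in> carrier_mat n m" and B: "B \<in> carrier_mat m k"
  shows "mat_adjoint (A * B) = mat_adjoint B * mat_adjoint A"
proof (rule eq_matI)
  have AB: "A * B \<in> carrier_mat n k" using A B by auto
  show "dim_row (mat_adjoint (A * B)) = dim_row (mat_adjoint B * mat_adjoint A)"
    using adj_carrier[OF AB] adj_carrier[OF B] by auto
  show "dim_col (mat_adjoint (A * B)) = dim_col (mat_adjoint B * mat_adjoint A)"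
    using adj_carrier[OF AB] adj_carrier[OF A] by auto
  fix i j assume i: "i < dim_row (mat_adjoint B * mat_adjoint A)" and j: "j < dim_col (mat_adjoint B * mat_adjoint A)"
  hence i: "i < k" and j: "j < n" using adj_carrier[OF A] adj_carrier[OF B] by auto
  have "mat_adjoint (A * B) $$ (i, j) = conjugate ((A*B) $$ (j,i))" using adj_index[OF AB i j] .
  also have "\<dots> = (\<Sum>l = 0..<m. conjugate (B $$ (l,i)) * conjugate (A $$ (j,l)))"
    using A B i j by (simp add: scalar_prod_def sum_conjugate conjugate_dist_mul mult.commute)
  also have "\<dots> = (mat_adjoint B * mat_adjoint A) $$ (i,j)"
    using A B i j
    by (simp add: scalar_prod_def)
  finally show "mat_adjoint (A * B) $$ (i, j) = (mat_adjoint B * mat_adjoint A) $$ (i, j)" .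
qed

lemma conjugate_one[simp]: "conjugate (1::'a::conjugatable_field) = 1"
proof -
  let ?c = "conjugate (1::'a)"
  have "?c = ?c * ?c" by (subst conjugate_dist_mul[symmetric]) simp
  moreover have "?c \<noteq> 0" by (simp only: conjugate_zero_iff one_neq_zero not_False_eq_True)
  ultimately have "?c * ?c = ?c * 1" by (simp only: mult_1_right)
  thus ?thesis by (rule mult_left_cancel[OF \<open>?c \<noteq> 0\<close>, THEN iffD1])
qed

lemma conjugate_minus: "conjugate ((a::'a::conjugatable_field) - b) = conjugate a - conjugate b"
  by (simp only: diff_conv_add_uminus conjugate_dist_add conjugate_neg)

lemma adj_add:
  fixes A :: "'a::conjugatable_field mat"
  assumes A: "A \<in> carrier_mat n m" and B: "B \<in> carrier_mat n m"
  shows "mat_adjoint (A + B) = mat_adjoint A + mat_adjoint B"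
  by (rule eq_matI, insert A B, auto simp: conjugate_dist_add)

lemma adj_minus:
  fixes A :: "'a::conjugatable_field mat"
  assumes A: "A \<in> carrier_mat n m" and B: "B \<in> carrier_mat n m"
  shows "mat_adjoint (A - B) = mat_adjoint A - mat_adjoint B"
  by (rule eq_matI, insert A B, auto simp: conjugate_minus)

lemma adj_one: "mat_adjoint (1\<^sub>m n :: 'a::conjugatable_field mat) = 1\<^sub>m n"
  by (rule eq_matI, auto)

lemma adj_smult:
  fixes A :: "'a::conjugatable_field mat"
  assumes A: "A \<in> carrier_mat n m"
  shows "mat_adjoint (c \<cdot>\<^sub>m A) = conjugate c \<cdot>\<^sub>m mat_adjoint A"
  by (rule eq_matI, insert A, auto simp: conjugate_dist_mul)

lemma adj_inner:
  fixes A :: "'a::conjugatable_field mat"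
  assumes A: "A \<in> carrier_mat n m" and v: "v \<in> carrier_vec m" and w: "w \<in> carrier_vec n"
  shows "(A *\<^sub>v v) \<bullet>c w = v \<bullet>c (mat_adjoint A *\<^sub>v w)"
proof -
  have "(A *\<^sub>v v) \<bullet>c w = (\<Sum>i = 0..<n. (\<Sum>j = 0..<m. A $$ (i,j) * v $ j) * conjugate (w $ i))"
    using A v w by (simp add: scalar_prod_def)
  also have "\<dots> = (\<Sum>i = 0..<n. \<Sum>j = 0..<m. v $ j * (A $$ (i,j) * conjugate (w $ i)))"
    by (rule sum.cong[OF refl], simp add: sum_distrib_right, rule sum.cong[OF refl], simp add: mult_ac)
  also have "\<dots> = (\<Sum>j = 0..<m. \<Sum>i = 0..<n. v $ j * (A $$ (i,j) * conjugate (w $ i)))"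
    by (rule sum.swap)
  also have "\<dots> = v \<bullet>c (mat_adjoint A *\<^sub>v w)"
    using A v w adj_carrier[OF A]
    by (simp add: scalar_prod_def adj_index sum_conjugate conjugate_dist_mul sum_distrib_left)
  finally show ?thesis .
qed

lemma ker_adj:
  fixes M :: "'a::conjugatable_ordered_field mat"
  assumes M: "M \<in> carrier_mat n n" and v: "v \<in> carrier_vec n"
   and z: "(mat_adjoint M * M) *\<^sub>v v = 0\<^sub>v n"
  shows "M *\<^sub>v v = 0\<^sub>v n"
proof -
  have Mv: "M *\<^sub>v v \<in> carrier_vec n" using M v by auto
  have "(M *\<^sub>v v) \<bullet>c (M *\<^sub>v v) = v \<bullet>c (mat_adjoint M *\<^sub>v (M *\<^sub>v v))"
    by (rule adj_inner[OF M v Mv])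
  also have "mat_adjoint M *\<^sub>v (M *\<^sub>v v) = (mat_adjoint M * M) *\<^sub>v v"
    using assoc_mult_mat_vec[OF adj_carrier[OF M] M v] by simp
  also have "v \<bullet>c \<dots> = 0" unfolding z using v by simp
  finally show ?thesis using conjugate_square_eq_0_vec[OF Mv] by simp
qed

lemma kernel_fin_dim:
  fixes M :: "'a::field mat"
  assumes M: "M \<in> carrier_mat n n"
  shows "vectorspace.fin_dim class_ring ((module_vec TYPE('a) n)\<lparr>carrier := mat_kernel M\<rparr>)"
proof -
  interpret KM: kernel n n M by (unfold_locales, rule M)
  from kernel_basis_exists[OF M] obtain B where "finite B" "KM.basis B" by auto
  thus ?thesis unfolding KM.Ker.fin_dim_def KM.Ker.basis_def by auto
qed

lemma kernel_dim_le:
  fixes M N F :: "'a::field mat"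
  assumes M: "M \<in> carrier_mat n n" and N: "N \<in> carrier_mat n n" and F: "F \<in> carrier_mat n n"
  and maps: "\<And>v. v \<in> mat_kernel M \<Longrightarrow> F *\<^sub>v v \<in> mat_kernel N"
  and inj: "\<And>v. v \<in> mat_kernel M \<Longrightarrow> F *\<^sub>v v = 0\<^sub>v n \<Longrightarrow> v = 0\<^sub>v n"
  shows "kernel_dim M \<le> kernel_dim N"
proof -
  interpret KM: kernel n n M by (unfold_locales, rule M)
  interpret KN: kernel n n N by (unfold_locales, rule N)
  define T where "T = (\<lambda>v. F *\<^sub>v v)"
  have kM: "\<And>v. v \<in> mat_kernel M \<Longrightarrow> v \<in> carrier_vec n" using mat_kernelD[OF M] by auto
  have kN: "\<And>v. v \<in> mat_kernel N \<Longrightarrow> v \<in> carrier_vec n" using mat_kernelD[OF N] by auto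
  have hom: "T \<in> LinearCombinations.module_hom class_ring KM.VK KN.VK"
    unfolding LinearCombinations.module_hom_def T_def
    using maps kM F by (auto simp: module_vec_simps mult_add_distrib_mat_vec mult_mat_vec)
  have mM: "Module.module class_ring KM.VK" using KM.Ker.vectorspace_axioms unfolding vectorspace_def by blast
  have mN: "Module.module class_ring KN.VK" using KN.Ker.vectorspace_axioms unfolding vectorspace_def by blast
  interpret L: linear_map class_ring KM.VK KN.VK T
    by (intro linear_map.intro KM.Ker.vectorspace_axioms KN.Ker.vectorspace_axioms mod_hom.intro
       mM mN mod_hom_axioms.intro hom)
  have fdM: "KM.Ker.fin_dim" using kernel_fin_dim[OF M] .
  have fdN: "KN.Ker.fin_dim" using kernel_fin_dim[OF N] .
  have injT: "inj_on T (mat_kernel M)"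
  proof (rule inj_onI)
    fix x y assume x: "x \<in> mat_kernel M" and y: "y \<in> mat_kernel M" and eq: "T x = T y"
    have xc: "x \<in> carrier_vec n" and yc: "y \<in> carrier_vec n" using kM x y by auto
    have "M *\<^sub>v (x - y) = M *\<^sub>v x - M *\<^sub>v y" using M xc yc by (simp add: mult_minus_distrib_mat_vec)
    also have "\<dots> = 0\<^sub>v n" using mat_kernelD[OF M x] mat_kernelD[OF M y] by auto
    finally have xy: "x - y \<in> mat_kernel M" using M xc yc by (intro mat_kernelI[OF M]) auto
    have "F *\<^sub>v (x - y) = F *\<^sub>v x - F *\<^sub>v y" using F xc yc by (simp add: mult_minus_distrib_mat_vec)
    also have "\<dots> = 0\<^sub>v n" using eq F xc yc unfolding T_def by auto
    finally have xy0: "x - y = 0\<^sub>v n" by (rule inj[OF xy])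
    show "x = y"
    proof (rule eq_vecI)
      fix i assume i: "i < dim_vec y"
      then have "(x - y) $ i = 0" using xy0 yc by simp
      thus "x $ i = y $ i" using i xc yc by simp
    qed (use xc yc in simp)
  qed
  have sub: "VectorSpace.subspace class_ring L.imT KN.VK" by (rule L.imT_is_subspace)
  interpret Im: vectorspace class_ring "KN.Ker.vs L.imT"
    by (rule KN.Ker.subspace_is_vs[OF sub])
  have hom2: "T \<in> LinearCombinations.module_hom class_ring KM.VK (KN.Ker.vs L.imT)"
    using hom unfolding LinearCombinations.module_hom_def mod_hom.im_def[OF L.mod_hom_axioms] by auto
  have mI: "Module.module class_ring (KN.Ker.vs L.imT)" using Im.vectorspace_axioms unfolding vectorspace_def by blast
  interpret L2: linear_map class_ring KM.VK "KN.Ker.vs L.imT" T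
    by (intro linear_map.intro KM.Ker.vectorspace_axioms Im.vectorspace_axioms mod_hom.intro
       mM mI mod_hom_axioms.intro hom2)
  have surj: "T ` carrier KM.VK = carrier (KN.Ker.vs L.imT)"
    by (simp add: mod_hom.im_def[OF L.mod_hom_axioms])
  have injT': "inj_on T (carrier KM.VK)" using injT by simp
  have d1: "KM.dim = Im.dim" by (rule L2.dim_eq[OF fdM injT' surj])
  have fdI: "Im.fin_dim" by (rule L2.surj_fin_dim[OF fdM surj])
  have d2: "Im.dim \<le> KN.dim" by (rule KN.Ker.subspace_dim[OF sub fdN fdI])
  show ?thesis using d1 d2 by simp
qed

lemma kernel_dim_eq:
  fixes M N :: "'a::field mat"
  assumes M: "M \<in> carrier_mat n n" and N: "N \<in> carrier_mat n n"
  and eq: "mat_kernel M = mat_kernel N"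
  shows "kernel_dim M = kernel_dim N"
proof -
  have "\<And>v. v \<in> mat_kernel M \<Longrightarrow> v \<in> carrier_vec n" using mat_kernelD[OF M] by auto
  hence a: "kernel_dim M \<le> kernel_dim N"
    by (intro kernel_dim_le[OF M N one_carrier_mat], auto simp: eq)
  have "\<And>v. v \<in> mat_kernel N \<Longrightarrow> v \<in> carrier_vec n" using mat_kernelD[OF N] by auto
  hence b: "kernel_dim N \<le> kernel_dim M"
    by (intro kernel_dim_le[OF N M one_carrier_mat], auto simp: eq)
  from a b show ?thesis by simp
qed

lemma (in ring) idem_id1: assumes p: "p \<in> carrier R" and pa: "pa \<in> carrier R" and pp: "p \<otimes> p = p" and papa: "pa \<otimes> pa = pa"
 shows "(\<one> \<ominus> pa) \<otimes> (\<one> \<ominus> p) \<otimes> ((\<one> \<ominus> pa) \<otimes> p) = ((\<one> \<ominus> pa) \<otimes> p) \<otimes> (pa \<otimes> p)"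
proof -
  have pp2: "\<And>x. x \<in> carrier R \<Longrightarrow> p \<otimes> (p \<otimes> x) = p \<otimes> x" using pp p by (simp add: m_assoc[symmetric])
  have pa2: "\<And>x. x \<in> carrier R \<Longrightarrow> pa \<otimes> (pa \<otimes> x) = pa \<otimes> x" using papa pa by (simp add: m_assoc[symmetric])
  show ?thesis using p pa pp papa pp2 pa2
    by (simp add: a_minus_def r_distr l_distr m_assoc r_minus l_minus minus_add minus_minus r_neg1 r_neg2 a_ac)
qed

lemma (in ring) idem_id2: assumes p: "p \<in> carrier R" and pa: "pa \<in> carrier R" and pp: "p \<otimes> p = p" and papa: "pa \<otimes> pa = pa"
 shows "pa \<otimes> (\<one> \<ominus> p) \<otimes> ((\<one> \<ominus> pa) \<otimes> p) = (pa \<otimes> p) \<otimes> (pa \<otimes> p) \<ominus> pa \<otimes> p"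
proof -
  have pp2: "\<And>x. x \<in> carrier R \<Longrightarrow> p \<otimes> (p \<otimes> x) = p \<otimes> x" using pp p by (simp add: m_assoc[symmetric])
  have pa2: "\<And>x. x \<in> carrier R \<Longrightarrow> pa \<otimes> (pa \<otimes> x) = pa \<otimes> x" using papa pa by (simp add: m_assoc[symmetric])
  show ?thesis using p pa pp papa pp2 pa2
    by (simp add: a_minus_def r_distr l_distr m_assoc r_minus l_minus minus_add minus_minus r_neg1 r_neg2 a_ac)
qed

lemma (in ring) idem_id3: assumes p: "p \<in> carrier R" and pp: "p \<otimes> p = p"
 shows "(\<one> \<ominus> p) \<otimes> (\<one> \<ominus> p) = \<one> \<ominus> p"
  using p pp by (simp add: a_minus_def r_distr l_distr m_assoc r_minus l_minus minus_add minus_minus r_neg1 r_neg2 a_ac)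

lemma (in ring) idem_id4: assumes p: "p \<in> carrier R"
 shows "\<one> \<ominus> (\<one> \<ominus> p) = p"
  using p by (simp add: a_minus_def minus_add minus_minus r_neg r_neg1 r_neg2 a_ac)

lemma mat_ring_minus:
  fixes A B :: "'a::comm_ring_1 mat"
  assumes A: "A \<in> carrier_mat n n" and B: "B \<in> carrier_mat n n"
  shows "A \<ominus>\<^bsub>ring_mat TYPE('a) n b\<^esub> B = A - B"
proof -
  interpret R: ring "ring_mat TYPE('a) n b" by (rule ring_mat)
  have "\<ominus>\<^bsub>ring_mat TYPE('a) n b\<^esub> B = - B"
    by (rule R.minus_equality) (use B in \<open>auto simp: ring_mat_simps\<close>)
  thus ?thesis unfolding a_minus_def using A B by (simp add: ring_mat_simps minus_add_uminus_mat)
qed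

lemma mat_idem_ids:
  fixes P Pa :: "'a::comm_ring_1 mat"
  assumes P: "P \<in> carrier_mat n n" and Pa: "Pa \<in> carrier_mat n n" and PP: "P * P = P" and PaPa: "Pa * Pa = Pa"
  shows "(1\<^sub>m n - Pa) * (1\<^sub>m n - P) * ((1\<^sub>m n - Pa) * P) = ((1\<^sub>m n - Pa) * P) * (Pa * P)"
    "(Pa * (1\<^sub>m n - P)) * ((1\<^sub>m n - Pa) * P) = (Pa * P) * (Pa * P) - Pa * P"
    "(1\<^sub>m n - P) * (1\<^sub>m n - P) = 1\<^sub>m n - P"
    "1\<^sub>m n - (1\<^sub>m n - P) = P"
proof -
  let ?R = "ring_mat TYPE('a) n ()"
  interpret R: ring ?R by (rule ring_mat)
  have c: "P \<in> carrier ?R" "Pa \<in> carrier ?R" using P Pa by (auto simp: ring_mat_simps)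
  have m: "\<And>X Y. X \<in> carrier_mat n n \<Longrightarrow> Y \<in> carrier_mat n n \<Longrightarrow> X \<ominus>\<^bsub>?R\<^esub> Y = X - Y" by (rule mat_ring_minus)
  have PP': "P \<otimes>\<^bsub>?R\<^esub> P = P" and PaPa': "Pa \<otimes>\<^bsub>?R\<^esub> Pa = Pa" using PP PaPa by (auto simp: ring_mat_simps)
  show "(1\<^sub>m n - Pa) * (1\<^sub>m n - P) * ((1\<^sub>m n - Pa) * P) = ((1\<^sub>m n - Pa) * P) * (Pa * P)"
    using R.idem_id1[OF c PP' PaPa'] P Pa by (simp add: ring_mat_simps m)
  show "(Pa * (1\<^sub>m n - P)) * ((1\<^sub>m n - Pa) * P) = (Pa * P) * (Pa * P) - Pa * P"
    using R.idem_id2[OF c PP' PaPa'] P Pa m[of "Pa * P * (Pa * P)" "Pa * P"] by (simp add: ring_mat_simps m)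
  show "(1\<^sub>m n - P) * (1\<^sub>m n - P) = 1\<^sub>m n - P"
    using R.idem_id3[OF c(1) PP'] P by (simp add: ring_mat_simps m)
  show "1\<^sub>m n - (1\<^sub>m n - P) = P"
    by (rule eq_matI) (use P in auto)
qed

lemma smult_mat_vec:
  assumes A: "A \<in> carrier_mat n m" and v: "v \<in> carrier_vec m"
  shows "(c \<cdot>\<^sub>m A) *\<^sub>v v = c \<cdot>\<^sub>v (A *\<^sub>v v)"
  by (rule eq_vecI) (insert A v, auto simp: scalar_prod_def sum_distrib_left mult.assoc)

lemma char_mat_vec:
  fixes X :: "'a::field mat"
  assumes X: "X \<in> carrier_mat n n" and v: "v \<in> carrier_vec n"
  shows "char_matrix X e *\<^sub>v v = X *\<^sub>v v + (-e) \<cdot>\<^sub>v v"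
proof -
  have "char_matrix X e *\<^sub>v v = X *\<^sub>v v + ((-e) \<cdot>\<^sub>m 1\<^sub>m n) *\<^sub>v v"
    unfolding char_matrix_def using X v by (simp add: add_mult_distrib_mat_vec)
  also have "((-e) \<cdot>\<^sub>m 1\<^sub>m n) *\<^sub>v v = (-e) \<cdot>\<^sub>v v"
    using smult_mat_vec[OF one_carrier_mat v] v by simp
  finally show ?thesis .
qed

lemma adj_adj:
  fixes A :: "'a::conjugatable_field mat"
  shows "mat_adjoint (mat_adjoint A) = A"
  by (rule eq_matI, auto)

lemma ker_pow_stab:
  fixes M :: "'a::field mat"
  assumes M: "M \<in> carrier_mat n n"
  and stab: "\<And>v. v \<in> carrier_vec n \<Longrightarrow> M *\<^sub>v (M *\<^sub>v v) = 0\<^sub>v n \<Longrightarrow> M *\<^sub>v v = 0\<^sub>v n"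
  shows "v \<in> carrier_vec n \<Longrightarrow> (M ^\<^sub>m (Suc k)) *\<^sub>v v = 0\<^sub>v n \<longleftrightarrow> M *\<^sub>v v = 0\<^sub>v n"
proof (induct k arbitrary: v)
  case 0
  then show ?case using M by simp
next
  case (Suc k)
  have Mv: "M *\<^sub>v v \<in> carrier_vec n" using M Suc by auto
  have "(M ^\<^sub>m (Suc (Suc k))) *\<^sub>v v = (M ^\<^sub>m (Suc k)) *\<^sub>v (M *\<^sub>v v)"
    using M Suc by (simp del: pow_mat.simps add: pow_mat.simps(2)[of M "Suc k"] assoc_mult_mat_vec[of _ n n M n])
  also have "\<dots> = 0\<^sub>v n \<longleftrightarrow> M *\<^sub>v (M *\<^sub>v v) = 0\<^sub>v n" using Suc(1)[OF Mv] .
  also have "\<dots> \<longleftrightarrow> M *\<^sub>v v = 0\<^sub>v n" using stab[OF Suc(2)] M by auto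
  finally show ?case .
qed

lemma dim_gen_stab:
  fixes X :: "'a::field mat"
  assumes X: "X \<in> carrier_mat n n" and k: "k \<ge> 1"
  and stab: "\<And>v. v \<in> carrier_vec n \<Longrightarrow> char_matrix X a *\<^sub>v (char_matrix X a *\<^sub>v v) = 0\<^sub>v n \<Longrightarrow> char_matrix X a *\<^sub>v v = 0\<^sub>v n"
  shows "dim_gen_eigenspace X a k = kernel_dim (char_matrix X a)"
proof -
  obtain k' where k': "k = Suc k'" using k by (cases k, auto)
  have C: "char_matrix X a \<in> carrier_mat n n" using X by simp
  have "mat_kernel (char_matrix X a ^\<^sub>m k) = mat_kernel (char_matrix X a)"
    using ker_pow_stab[OF C stab, of _ k'] C unfolding k' by (auto simp: mat_kernel_def)
  thus ?thesis unfolding dim_gen_eigenspace_def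
    by (intro kernel_dim_eq[OF pow_carrier_mat[OF C] C])
qed

lemma dim_char_matrix[simp]: "dim_row (char_matrix A e) = dim_row A"
  unfolding char_matrix_def by auto

lemma mult_zero_vec_right: "A \<in> carrier_mat n m \<Longrightarrow> A *\<^sub>v 0\<^sub>v m = 0\<^sub>v n"
  by (rule eq_vecI) (auto simp: scalar_prod_def)

lemma char_matrix_0: "X \<in> carrier_mat n n \<Longrightarrow> char_matrix X (0::'a::field) = X"
  unfolding char_matrix_def by (rule eq_matI) auto

lemma intertwine_char:
  fixes X Y F :: "'a::field mat"
  assumes X: "X \<in> carrier_mat n n" and Y: "Y \<in> carrier_mat n n" and F: "F \<in> carrier_mat n n"
  and YF: "Y * F = F * X"
  shows "char_matrix Y e * F = F * char_matrix X e"
proof -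
  have "char_matrix Y e * F = Y * F + ((-e) \<cdot>\<^sub>m 1\<^sub>m n) * F"
    unfolding char_matrix_def using X Y F by (simp add: add_mult_distrib_mat)
  also have "((-e) \<cdot>\<^sub>m 1\<^sub>m n) * F = (-e) \<cdot>\<^sub>m F"
    using mult_smult_assoc_mat[OF one_carrier_mat F] F by simp
  finally have a: "char_matrix Y e * F = Y * F + (-e) \<cdot>\<^sub>m F" .
  have "F * char_matrix X e = F * X + F * ((-e) \<cdot>\<^sub>m 1\<^sub>m n)"
    unfolding char_matrix_def using X Y F by (simp add: mult_add_distrib_mat)
  also have "F * ((-e) \<cdot>\<^sub>m 1\<^sub>m n) = (-e) \<cdot>\<^sub>m F"
    using mult_smult_distrib[OF F one_carrier_mat] F by simp
  finally show ?thesis using YF a by simp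
qed

lemma intertwine_pow:
  fixes X Y F :: "'a::field mat"
  assumes X: "X \<in> carrier_mat n n" and Y: "Y \<in> carrier_mat n n" and F: "F \<in> carrier_mat n n"
  and YF: "Y * F = F * X"
  shows "char_matrix Y e ^\<^sub>m k * F = F * char_matrix X e ^\<^sub>m k"
proof (induct k)
  case 0
  then show ?case using X Y F by simp
next
  case (Suc k)
  let ?CX = "char_matrix X e" and ?CY = "char_matrix Y e"
  have CX: "?CX \<in> carrier_mat n n" and CY: "?CY \<in> carrier_mat n n" using X Y by auto
  have "?CY ^\<^sub>m Suc k * F = ?CY ^\<^sub>m k * (?CY * F)"
    using CY F by (simp add: assoc_mult_mat[of _ n n _ n _ n])
  also have "?CY * F = F * ?CX" by (rule intertwine_char[OF X Y F YF])
  also have "?CY ^\<^sub>m k * (F * ?CX) = (?CY ^\<^sub>m k * F) * ?CX"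
    using CY CX F by (simp add: assoc_mult_mat[of _ n n _ n _ n])
  also have "\<dots> = (F * ?CX ^\<^sub>m k) * ?CX" using Suc by simp
  also have "\<dots> = F * ?CX ^\<^sub>m Suc k"
    using CX F by (simp add: assoc_mult_mat[of _ n n _ n _ n])
  finally show ?case .
qed

lemma inv_gen:
  fixes X :: "'a::field mat"
  assumes X: "X \<in> carrier_mat n n" and e0: "e \<noteq> 0" and e1: "e \<noteq> 1"
  shows "v \<in> carrier_vec n \<Longrightarrow> X *\<^sub>v (X *\<^sub>v v) = X *\<^sub>v v \<Longrightarrow> (char_matrix X e ^\<^sub>m k) *\<^sub>v v = 0\<^sub>v n \<Longrightarrow> v = 0\<^sub>v n"
proof (induct k arbitrary: v)
  case 0
  then show ?case using X by simp
next
  case (Suc k)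
  let ?C = "char_matrix X e"
  have C: "?C \<in> carrier_mat n n" using X by simp
  have v: "v \<in> carrier_vec n" by fact
  define w where "w = ?C *\<^sub>v v"
  have w: "w \<in> carrier_vec n" unfolding w_def using C v by simp
  have wdef: "w = X *\<^sub>v v + (-e) \<cdot>\<^sub>v v" unfolding w_def by (rule char_mat_vec[OF X v])
  have Xv: "X *\<^sub>v v \<in> carrier_vec n" using X v by simp
  have XXv: "X *\<^sub>v (X *\<^sub>v v) = X *\<^sub>v v" by fact
  have Xw: "X *\<^sub>v w = X *\<^sub>v v + (-e) \<cdot>\<^sub>v (X *\<^sub>v v)"
    unfolding wdef using X v Xv XXv by (simp add: mult_add_distrib_mat_vec mult_mat_vec)
  have XXw: "X *\<^sub>v (X *\<^sub>v w) = X *\<^sub>v w"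
    unfolding Xw using X v Xv XXv by (simp add: mult_add_distrib_mat_vec mult_mat_vec)
  have "(?C ^\<^sub>m Suc k) *\<^sub>v v = (?C ^\<^sub>m k) *\<^sub>v w"
    unfolding w_def using C v by (simp add: assoc_mult_mat_vec[of _ n n _ n])
  hence "(?C ^\<^sub>m k) *\<^sub>v w = 0\<^sub>v n" using Suc(4) by simp
  from Suc(1)[OF w XXw this] have w0: "w = 0\<^sub>v n" .
  have Xv_eq: "X *\<^sub>v v = e \<cdot>\<^sub>v v"
  proof (rule eq_vecI)
    fix i assume i: "i < dim_vec (e \<cdot>\<^sub>v v)"
    hence i: "i < n" using v by simp
    have "w $ i = 0" using w0 i by simp
    hence "(X *\<^sub>v v) $ i + (-e) * v $ i = 0" unfolding wdef using i v Xv by simp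
    thus "(X *\<^sub>v v) $ i = (e \<cdot>\<^sub>v v) $ i" using i v by (simp add: algebra_simps)
  qed (use X v in simp)
  have "X *\<^sub>v (X *\<^sub>v v) = e \<cdot>\<^sub>v (e \<cdot>\<^sub>v v)"
    unfolding Xv_eq using X v by (simp add: mult_mat_vec Xv_eq)
  hence eq: "e \<cdot>\<^sub>v (e \<cdot>\<^sub>v v) = e \<cdot>\<^sub>v v" using XXv Xv_eq by simp
  show "v = 0\<^sub>v n"
  proof (rule eq_vecI)
    fix i assume i: "i < dim_vec (0\<^sub>v n :: 'a vec)"
    hence i: "i < n" by simp
    have "(e \<cdot>\<^sub>v (e \<cdot>\<^sub>v v)) $ i = (e \<cdot>\<^sub>v v) $ i" using eq by simp
    hence "e * (e * v $ i) = e * v $ i" using i v by simp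
    hence "e * v $ i = v $ i" using e0 by simp
    hence "(e - 1) * v $ i = 0" by (simp add: algebra_simps)
    thus "v $ i = 0\<^sub>v n $ i" using e1 i by simp
  qed (use v in simp)
qed

lemma gen_eig_le:
  fixes X Y F G :: "'a::field mat"
  assumes X: "X \<in> carrier_mat n n" and Y: "Y \<in> carrier_mat n n" and F: "F \<in> carrier_mat n n"
  and G: "G \<in> carrier_mat n n"
  and YF: "Y * F = F * X" and GF: "G * F = X * X - X" and e0: "e \<noteq> 0" and e1: "e \<noteq> 1"
  shows "dim_gen_eigenspace X e k \<le> dim_gen_eigenspace Y e k"
proof -
  let ?K = "char_matrix X e ^\<^sub>m k" and ?L = "char_matrix Y e ^\<^sub>m k"
  have K: "?K \<in> carrier_mat n n" and L: "?L \<in> carrier_mat n n" using X Y by auto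
  have LF: "?L * F = F * ?K" by (rule intertwine_pow[OF X Y F YF])
  show ?thesis unfolding dim_gen_eigenspace_def
  proof (rule kernel_dim_le[OF K L F])
    fix v assume v: "v \<in> mat_kernel ?K"
    from mat_kernelD[OF K v] have vc: "v \<in> carrier_vec n" and Kv: "?K *\<^sub>v v = 0\<^sub>v n" by auto
    have "?L *\<^sub>v (F *\<^sub>v v) = (?L * F) *\<^sub>v v" using L F vc by (simp add: assoc_mult_mat_vec[of _ n n _ n])
    also have "\<dots> = F *\<^sub>v (?K *\<^sub>v v)" unfolding LF using F K vc by (simp add: assoc_mult_mat_vec[of _ n n _ n])
    also have "\<dots> = 0\<^sub>v n" unfolding Kv using F by (simp add: mult_zero_vec_right)
    finally show "F *\<^sub>v v \<in> mat_kernel ?L" using L F vc by (intro mat_kernelI[OF L]) auto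
  next
    fix v assume v: "v \<in> mat_kernel ?K" and Fv: "F *\<^sub>v v = 0\<^sub>v n"
    from mat_kernelD[OF K v] have vc: "v \<in> carrier_vec n" and Kv: "?K *\<^sub>v v = 0\<^sub>v n" by auto
    have "(G * F) *\<^sub>v v = G *\<^sub>v (F *\<^sub>v v)" using G F vc by (simp add: assoc_mult_mat_vec[of _ n n _ n])
    also have "\<dots> = 0\<^sub>v n" unfolding Fv using G by (simp add: mult_zero_vec_right)
    finally have "(X * X - X) *\<^sub>v v = 0\<^sub>v n" unfolding GF .
    hence "(X * X) *\<^sub>v v - X *\<^sub>v v = 0\<^sub>v n" using minus_mult_distrib_mat_vec[OF mult_carrier_mat[OF X X] X vc] by simp
    hence "X *\<^sub>v (X *\<^sub>v v) - X *\<^sub>v v = 0\<^sub>v n" using assoc_mult_mat_vec[OF X X vc] by simp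
    hence XX: "X *\<^sub>v (X *\<^sub>v v) = X *\<^sub>v v"
    proof -
      assume h: "X *\<^sub>v (X *\<^sub>v v) - X *\<^sub>v v = 0\<^sub>v n"
      show ?thesis
      proof (rule eq_vecI)
        fix i assume "i < dim_vec (X *\<^sub>v v)"
        hence i: "i < n" using X by simp
        have "(X *\<^sub>v (X *\<^sub>v v) - X *\<^sub>v v) $ i = 0" using h i by simp
        thus "(X *\<^sub>v (X *\<^sub>v v)) $ i = (X *\<^sub>v v) $ i" using i X vc by simp
      qed (use X vc in simp)
    qed
    show "v = 0\<^sub>v n" by (rule inv_gen[OF X e0 e1 vc XX Kv])
  qed
qed

lemma alg_geo:
  fixes M :: "complex mat"
  assumes M: "M \<in> carrier_mat n n"
  shows "Polynomial.order a (char_poly M) = dim_gen_eigenspace M a n"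
proof -
  from char_poly_factorized[OF M] obtain as where cp: "char_poly M = (\<Prod>a\<leftarrow>as. [:- a, 1:])" by auto
  from jordan_nf_exists[OF M cp] obtain n_as where jnf: "jordan_nf M n_as" by auto
  let ?L = "map fst (filter (\<lambda>na. snd na = a) n_as)"
  have ord: "Polynomial.order a (char_poly M) = sum_list ?L" by (rule jordan_nf_order[OF jnf])
  have fl: "filter (\<lambda>(n,e). e = a) n_as = filter (\<lambda>na. snd na = a) n_as"
    by (rule filter_cong) auto
  have dg: "dim_gen_eigenspace M a n = sum_list (map (min n) ?L)"
    using dim_gen_eigenspace[OF jnf, of a n] unfolding fl .
  have deg: "degree (char_poly M) = n" and lc: "lead_coeff (char_poly M) = 1"
    using degree_monic_char_poly[OF M] by auto
  have nz: "char_poly M \<noteq> 0" using lc by auto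
  have bd: "\<And>d. d \<in> set ?L \<Longrightarrow> d \<le> n"
  proof -
    fix d assume "d \<in> set ?L"
    hence "d \<le> sum_list ?L" by (rule member_le_sum_list) auto
    also have "\<dots> = Polynomial.order a (char_poly M)" using ord by simp
    also have "\<dots> \<le> n" using order_degree[OF nz] deg by simp
    finally show "d \<le> n" .
  qed
  have mi: "\<And>x. x \<in> set ?L \<Longrightarrow> min n x = x"
  proof -
    fix x assume "x \<in> set ?L"
    hence "x \<le> n" by (rule bd)
    thus "min n x = x" by (rule min_absorb2)
  qed
  have mm: "map (min n) ?L = ?L" by (rule map_idI, rule mi)
  show ?thesis by (simp only: ord dg mm)
qed

lemma order_prod_lin:
  "Polynomial.order a (\<Prod>x\<leftarrow>as. [:- x, 1:]) = count (mset as) (a::'a::idom)"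
proof (induct as)
  case Nil
  then show ?case by (simp add: order_0I)
next
  case (Cons x as)
  have nz: "(\<Prod>x\<leftarrow>as. [:- x, 1:]) \<noteq> (0 :: 'a poly)" by (auto simp: prod_list_zero_iff)
  have eqp: "(\<Prod>y\<leftarrow>x # as. [:- y, 1:]) = [:- x, 1:] * (\<Prod>y\<leftarrow>as. [:- y, 1:])" by simp
  have lin_nz: "[:- x, 1:] \<noteq> (0 :: 'a poly)" by simp
  have pnz: "[:- x, 1:] * (\<Prod>y\<leftarrow>as. [:- y, 1:]) \<noteq> 0" using lin_nz nz mult_eq_0_iff by blast
  have "Polynomial.order a (\<Prod>x\<leftarrow>x # as. [:- x, 1:]) = Polynomial.order a [:- x, 1:] + Polynomial.order a (\<Prod>x\<leftarrow>as. [:- x, 1:])"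
    unfolding eqp by (rule order_mult[OF pnz])
  also have "Polynomial.order a [:- x, 1:] = (if x = a then 1 else 0)"
    by (simp add: order_linear')
  finally show ?case using Cons by auto
qed

lemma size_split01:
  "size X = count X 0 + count X 1 + size (filter_mset (\<lambda>a. a \<noteq> 0 \<and> a \<noteq> 1) (X :: complex multiset))"
  by (induct X) auto

lemma herm_stab:
  fixes M :: "'a::conjugatable_ordered_field mat"
  assumes M: "M \<in> carrier_mat n n" and v: "v \<in> carrier_vec n"
  and z: "(mat_adjoint M * M) *\<^sub>v ((mat_adjoint M * M) *\<^sub>v v) = 0\<^sub>v n"
  shows "(mat_adjoint M * M) *\<^sub>v v = 0\<^sub>v n"
proof -
  let ?H = "mat_adjoint M * M"
  have H: "?H \<in> carrier_mat n n" by (rule mult_carrier_mat[OF adj_carrier[OF M] M])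
  have hh: "mat_adjoint ?H = ?H" using adj_mult[OF adj_carrier[OF M] M] by (simp add: adj_adj)
  have "(mat_adjoint ?H * ?H) *\<^sub>v v = 0\<^sub>v n" unfolding hh using z H v by (simp add: assoc_mult_mat_vec[of _ n n _ n])
  thus ?thesis by (rule ker_adj[OF H v])
qed

lemma ker_AdjM:
  fixes M :: "'a::conjugatable_ordered_field mat"
  assumes M: "M \<in> carrier_mat n n"
  shows "mat_kernel (mat_adjoint M * M) = mat_kernel M"
proof
  show "mat_kernel (mat_adjoint M * M) \<subseteq> mat_kernel M"
  proof
    fix v assume v: "v \<in> mat_kernel (mat_adjoint M * M)"
    have H: "mat_adjoint M * M \<in> carrier_mat n n" by (rule mult_carrier_mat[OF adj_carrier[OF M] M])
    from mat_kernelD[OF H v] have vc: "v \<in> carrier_vec n" and z: "(mat_adjoint M * M) *\<^sub>v v = 0\<^sub>v n" by auto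
    show "v \<in> mat_kernel M" using ker_adj[OF M vc z] M vc by (intro mat_kernelI[OF M]) auto
  qed
  show "mat_kernel M \<subseteq> mat_kernel (mat_adjoint M * M)"
    by (rule mat_kernel_mult_subset[OF M adj_carrier[OF M]])
qed

lemma kernel_dim_one: "kernel_dim (1\<^sub>m n :: 'a::field mat) = 0"
  unfolding kernel_dim_def using kernel_one_mat(1)[of n, where 'a='a] by simp

lemma factorized_mset:
  fixes M :: "complex mat"
  assumes M: "M \<in> carrier_mat n n"
  shows "\<exists>X. size X = n \<and> (\<forall>a. Polynomial.order a (char_poly M) = count X a)"
proof -
  from char_poly_factorized[OF M] obtain as where cp: "char_poly M = (\<Prod>a\<leftarrow>as. [:- a, 1:])" and len: "length as = n" by auto
  show ?thesis by (rule exI[of _ "mset as"]) (simp add: cp len order_prod_lin)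
qed

lemma main_complex:
  fixes P :: "complex mat"
  assumes P: "P \<in> carrier_mat n n" and PP: "P * P = P"
  shows "Polynomial.order 0 (char_poly (mat_adjoint (1\<^sub>m n - P) * (1\<^sub>m n - P))) + Polynomial.order 0 (char_poly (mat_adjoint P * P)) = n \<and>
         Polynomial.order 0 (char_poly (mat_adjoint (1\<^sub>m n - P) * (1\<^sub>m n - P))) + Polynomial.order 1 (char_poly (mat_adjoint (1\<^sub>m n - P) * (1\<^sub>m n - P)))
       = Polynomial.order 0 (char_poly (mat_adjoint P * P)) + Polynomial.order 1 (char_poly (mat_adjoint P * P))"
proof -
  define Q where "Q = 1\<^sub>m n - P"
  define Pa where "Pa = mat_adjoint P"
  define Qa where "Qa = mat_adjoint Q"
  define A where "A = Pa * P"
  define B where "B = Qa * Q"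
  have Q: "Q \<in> carrier_mat n n" unfolding Q_def by (rule minus_carrier_mat[OF P])
  have Pa: "Pa \<in> carrier_mat n n" unfolding Pa_def using P by simp
  have Qa: "Qa \<in> carrier_mat n n" unfolding Qa_def using Q by simp
  have A: "A \<in> carrier_mat n n" unfolding A_def using Pa P by (rule mult_carrier_mat)
  have B: "B \<in> carrier_mat n n" unfolding B_def using Qa Q by (rule mult_carrier_mat)
  have PaPa: "Pa * Pa = Pa" unfolding Pa_def using adj_mult[OF P P] PP by simp
  have Qa_eq: "Qa = 1\<^sub>m n - Pa" unfolding Qa_def Q_def Pa_def using adj_minus[OF one_carrier_mat P] by (simp add: adj_one)
  note ids = mat_idem_ids[OF P Pa PP PaPa]
  have QQ: "Q * Q = Q" unfolding Q_def by (rule ids(3))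
  have QaQa: "Qa * Qa = Qa" unfolding Qa_eq by (rule mat_idem_ids(3)[OF Pa Pa PaPa PaPa])
  have P_eq: "1\<^sub>m n - Q = P" unfolding Q_def using ids(4) by simp
  have Pa_eq: "1\<^sub>m n - Qa = Pa" unfolding Qa_eq using mat_idem_ids(4)[OF Pa Pa PaPa PaPa] by simp
  note ids2 = mat_idem_ids[OF Q Qa QQ QaQa]
  define F where "F = Qa * P"
  define G where "G = Pa * Q"
  have F: "F \<in> carrier_mat n n" unfolding F_def using Qa P by (rule mult_carrier_mat)
  have G: "G \<in> carrier_mat n n" unfolding G_def using Pa Q by (rule mult_carrier_mat)
  have BF: "B * F = F * A" unfolding B_def F_def A_def Qa_eq Q_def by (rule ids(1))
  have GF: "G * F = A * A - A" unfolding G_def F_def A_def Qa_eq Q_def by (rule ids(2))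
  have AG: "A * G = G * B" using ids2(1) unfolding Pa_eq P_eq A_def B_def G_def .
  have FG: "F * G = B * B - B" using ids2(2) unfolding Pa_eq P_eq B_def F_def G_def .
  have eqAB: "Polynomial.order e (char_poly A) = Polynomial.order e (char_poly B)" if e0: "e \<noteq> 0" and e1: "e \<noteq> 1" for e
  proof -
    have "dim_gen_eigenspace A e n \<le> dim_gen_eigenspace B e n" by (rule gen_eig_le[OF A B F G BF GF e0 e1])
    moreover have "dim_gen_eigenspace B e n \<le> dim_gen_eigenspace A e n" by (rule gen_eig_le[OF B A G F AG FG e0 e1])
    ultimately show ?thesis unfolding alg_geo[OF A] alg_geo[OF B] by simp
  qed
  have PPv: "P *\<^sub>v (P *\<^sub>v v) = P *\<^sub>v v" if "v \<in> carrier_vec n" for v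
    using assoc_mult_mat_vec[OF P P that] PP by simp
  have eqP: "Polynomial.order e (char_poly P) = 0" if e0: "e \<noteq> 0" and e1: "e \<noteq> 1" for e
  proof -
    let ?K = "char_matrix P e ^\<^sub>m n"
    have K: "?K \<in> carrier_mat n n" using P by simp
    have z: "v = 0\<^sub>v n" if "v \<in> mat_kernel ?K" for v
    proof -
      from mat_kernelD[OF K that] have vc: "v \<in> carrier_vec n" and Kv: "?K *\<^sub>v v = 0\<^sub>v n" by auto
      show ?thesis by (rule inv_gen[OF P e0 e1 vc PPv[OF vc] Kv])
    qed
    have "kernel_dim ?K \<le> kernel_dim (1\<^sub>m n :: complex mat)"
    proof (rule kernel_dim_le[OF K one_carrier_mat one_carrier_mat])
      fix v assume v: "v \<in> mat_kernel ?K"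
      show "1\<^sub>m n *\<^sub>v v \<in> mat_kernel (1\<^sub>m n)" using z[OF v]
        by (intro mat_kernelI[OF one_carrier_mat]) auto
    next
      fix v assume v: "v \<in> mat_kernel ?K"
      show "v = 0\<^sub>v n" using z[OF v] .
    qed
    thus ?thesis unfolding alg_geo[OF P] dim_gen_eigenspace_def kernel_dim_one by simp
  qed
  obtain XA where XA: "size XA = n" and oA: "\<And>a. Polynomial.order a (char_poly A) = count XA a"
    using factorized_mset[OF A] by auto
  obtain XB where XB: "size XB = n" and oB: "\<And>a. Polynomial.order a (char_poly B) = count XB a"
    using factorized_mset[OF B] by auto
  obtain XP where XP: "size XP = n" and oP: "\<And>a. Polynomial.order a (char_poly P) = count XP a"
    using factorized_mset[OF P] by auto
  have filtAB: "filter_mset (\<lambda>a. a \<noteq> 0 \<and> a \<noteq> 1) XA = filter_mset (\<lambda>a. a \<noteq> 0 \<and> a \<noteq> 1) XB"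
    by (rule multiset_eqI) (simp add: eqAB[unfolded oA oB])
  have filtP: "filter_mset (\<lambda>a. a \<noteq> 0 \<and> a \<noteq> 1) XP = {#}"
    by (rule multiset_eqI) (simp add: eqP[unfolded oP])
  have sA: "n = count XA 0 + count XA 1 + size (filter_mset (\<lambda>a. a \<noteq> 0 \<and> a \<noteq> 1) XA)"
    using size_split01[of XA] XA by simp
  have sB: "n = count XB 0 + count XB 1 + size (filter_mset (\<lambda>a. a \<noteq> 0 \<and> a \<noteq> 1) XB)"
    using size_split01[of XB] XB by simp
  have sP: "n = count XP 0 + count XP 1"
    using size_split01[of XP] XP filtP by simp
  have second: "count XB 0 + count XB 1 = count XA 0 + count XA 1"
    using sA sB filtAB by simp
  have first: "count XB 0 + count XA 0 = n"
  proof (cases "n = 0")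
    case True
    thus ?thesis using XA XB by simp
  next
    case False
    hence n1: "n \<ge> 1" by simp
    have cA0: "count XA 0 = kernel_dim P"
    proof -
      have "count XA 0 = dim_gen_eigenspace A 0 n" using oA[of 0] alg_geo[OF A] by simp
      also have "\<dots> = kernel_dim (char_matrix A 0)"
      proof (rule dim_gen_stab[OF A n1])
        fix v assume v: "v \<in> carrier_vec n" and z: "char_matrix A 0 *\<^sub>v (char_matrix A 0 *\<^sub>v v) = 0\<^sub>v n"
        show "char_matrix A 0 *\<^sub>v v = 0\<^sub>v n" using herm_stab[OF P v] z unfolding char_matrix_0[OF A] unfolding A_def Pa_def by simp
      qed
      also have "\<dots> = kernel_dim P"
      proof -
        have "mat_kernel A = mat_kernel P" unfolding A_def Pa_def by (rule ker_AdjM[OF P])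
        thus ?thesis unfolding char_matrix_0[OF A] by (rule kernel_dim_eq[OF A P])
      qed
      finally show ?thesis .
    qed
    have cB0: "count XB 0 = kernel_dim Q"
    proof -
      have "count XB 0 = dim_gen_eigenspace B 0 n" using oB[of 0] alg_geo[OF B] by simp
      also have "\<dots> = kernel_dim (char_matrix B 0)"
      proof (rule dim_gen_stab[OF B n1])
        fix v assume v: "v \<in> carrier_vec n" and z: "char_matrix B 0 *\<^sub>v (char_matrix B 0 *\<^sub>v v) = 0\<^sub>v n"
        show "char_matrix B 0 *\<^sub>v v = 0\<^sub>v n" using herm_stab[OF Q v] z unfolding char_matrix_0[OF B] unfolding B_def Qa_def by simp
      qed
      also have "\<dots> = kernel_dim Q"
      proof -
        have "mat_kernel B = mat_kernel Q" unfolding B_def Qa_def by (rule ker_AdjM[OF Q])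
        thus ?thesis unfolding char_matrix_0[OF B] by (rule kernel_dim_eq[OF B Q])
      qed
      finally show ?thesis .
    qed
    have cP0: "count XP 0 = kernel_dim P"
    proof -
      have "count XP 0 = dim_gen_eigenspace P 0 n" using oP[of 0] alg_geo[OF P] by simp
      also have "\<dots> = kernel_dim (char_matrix P 0)"
      proof (rule dim_gen_stab[OF P n1], unfold char_matrix_0[OF P])
        fix v assume "v \<in> carrier_vec n" "P *\<^sub>v (P *\<^sub>v v) = 0\<^sub>v n"
        thus "P *\<^sub>v v = 0\<^sub>v n" using PPv by simp
      qed
      finally show ?thesis unfolding char_matrix_0[OF P] .
    qed
    let ?C = "char_matrix P 1"
    have C: "?C \<in> carrier_mat n n" using P by simp
    have Cv: "?C *\<^sub>v v = P *\<^sub>v v + (-1) \<cdot>\<^sub>v v" if "v \<in> carrier_vec n" for v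
      by (rule char_mat_vec[OF P that])
    have cP1: "count XP 1 = kernel_dim Q"
    proof -
      have "count XP 1 = dim_gen_eigenspace P 1 n" using oP[of 1] alg_geo[OF P] by simp
      also have "\<dots> = kernel_dim ?C"
      proof (rule dim_gen_stab[OF P n1])
        fix v :: "complex vec" assume v: "v \<in> carrier_vec n" and z: "?C *\<^sub>v (?C *\<^sub>v v) = 0\<^sub>v n"
        have Pv: "P *\<^sub>v v \<in> carrier_vec n" using P v by simp
        have Cvc: "?C *\<^sub>v v \<in> carrier_vec n" using C v by simp
        have PCv: "P *\<^sub>v (?C *\<^sub>v v) = P *\<^sub>v v + (-1) \<cdot>\<^sub>v (P *\<^sub>v v)"
          unfolding Cv[OF v] using P v Pv PPv[OF v] by (simp add: mult_add_distrib_mat_vec mult_mat_vec)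
        have CCv: "?C *\<^sub>v (?C *\<^sub>v v) = P *\<^sub>v (?C *\<^sub>v v) + (-1) \<cdot>\<^sub>v (?C *\<^sub>v v)" by (rule Cv[OF Cvc])
        show "?C *\<^sub>v v = 0\<^sub>v n"
        proof (rule eq_vecI)
          fix i assume "i < dim_vec (0\<^sub>v n :: complex vec)"
          hence i: "i < n" by simp
          have "(?C *\<^sub>v (?C *\<^sub>v v)) $ i = 0" using z i by simp
          hence "(P *\<^sub>v v) $ i + - (P *\<^sub>v v) $ i + - (?C *\<^sub>v v) $ i = 0"
            unfolding CCv PCv using i carrier_vecD[OF Pv] carrier_vecD[OF Cvc] by simp
          thus "(?C *\<^sub>v v) $ i = 0\<^sub>v n $ i" using i by simp
        qed (use Cvc P in simp)
      qed
      also have "\<dots> = kernel_dim Q"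
      proof (rule kernel_dim_eq[OF C Q])
        have Qv: "Q *\<^sub>v v = v + (-1) \<cdot>\<^sub>v (P *\<^sub>v v)" if v: "v \<in> carrier_vec n" for v
          unfolding Q_def using minus_mult_distrib_mat_vec[OF one_carrier_mat P v] v P
          by (auto intro!: eq_vecI)
        show "mat_kernel ?C = mat_kernel Q"
        proof (rule equalityI; rule subsetI)
          fix v assume v: "v \<in> mat_kernel ?C"
          from mat_kernelD[OF C v] have vc: "v \<in> carrier_vec n" and z: "?C *\<^sub>v v = 0\<^sub>v n" by auto
          have "Q *\<^sub>v v = 0\<^sub>v n"
          proof (rule eq_vecI)
            fix i assume "i < dim_vec (0\<^sub>v n :: complex vec)"
            hence i: "i < n" by simp
            have "(?C *\<^sub>v v) $ i = 0" using z i by simp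
            thus "(Q *\<^sub>v v) $ i = 0\<^sub>v n $ i" unfolding Cv[OF vc] Qv[OF vc] using i vc P by simp
          qed (use Q vc in simp)
          thus "v \<in> mat_kernel Q" by (intro mat_kernelI[OF Q vc])
        next
          fix v assume v: "v \<in> mat_kernel Q"
          from mat_kernelD[OF Q v] have vc: "v \<in> carrier_vec n" and z: "Q *\<^sub>v v = 0\<^sub>v n" by auto
          have "?C *\<^sub>v v = 0\<^sub>v n"
          proof (rule eq_vecI)
            fix i assume "i < dim_vec (0\<^sub>v n :: complex vec)"
            hence i: "i < n" by simp
            have "(Q *\<^sub>v v) $ i = 0" using z i by simp
            thus "(?C *\<^sub>v v) $ i = 0\<^sub>v n $ i" unfolding Cv[OF vc] Qv[OF vc] using i vc P by simp
          qed (use C vc P in simp)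
          thus "v \<in> mat_kernel ?C" by (intro mat_kernelI[OF C vc])
        qed
      qed
      finally show ?thesis .
    qed
    show ?thesis using sP cA0 cB0 cP0 cP1 by simp
  qed
  show ?thesis using first second unfolding oA oB A_def B_def Pa_def Qa_def Q_def
    by (simp add: oA[unfolded A_def Pa_def] oB[unfolded B_def Qa_def Q_def])
qed

lemma adj_of_real: "mat_adjoint (map_mat complex_of_real M) = map_mat complex_of_real (mat_adjoint M)"
  by (rule eq_matI) auto

lemma real_transfer:
  fixes M :: "real mat"
  assumes M: "M \<in> carrier_mat n n"
  shows "Polynomial.order a (char_poly (mat_adjoint M * M)) =
    Polynomial.order (complex_of_real a) (char_poly (mat_adjoint (map_mat complex_of_real M) * map_mat complex_of_real M))"
proof -
  have H: "mat_adjoint M * M \<in> carrier_mat n n" by (rule mult_carrier_mat[OF adj_carrier[OF M] M])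
  have hom: "map_poly_inj_idom_divide_hom complex_of_real" by unfold_locales
  have e1: "map_mat complex_of_real (mat_adjoint M * M) = mat_adjoint (map_mat complex_of_real M) * map_mat complex_of_real M"
    unfolding adj_of_real by (rule of_real_hom.mat_hom_mult[OF adj_carrier[OF M] M])
  have e2: "char_poly (map_mat complex_of_real (mat_adjoint M * M)) = map_poly complex_of_real (char_poly (mat_adjoint M * M))"
    by (rule of_real_hom.char_poly_hom[OF H])
  have "char_poly (mat_adjoint (map_mat complex_of_real M) * map_mat complex_of_real M) = map_poly complex_of_real (char_poly (mat_adjoint M * M))"
    using e2 unfolding e1 .
  thus ?thesis using map_poly_inj_idom_divide_hom.order_hom[OF hom] by simp
qed

lemma main_real:
  fixes P :: "real mat"
  assumes P: "P \<in> carrier_mat n n" and PP: "P * P = P"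
  shows "Polynomial.order 0 (char_poly (mat_adjoint (1\<^sub>m n - P) * (1\<^sub>m n - P))) + Polynomial.order 0 (char_poly (mat_adjoint P * P)) = n \<and>
         Polynomial.order 0 (char_poly (mat_adjoint (1\<^sub>m n - P) * (1\<^sub>m n - P))) + Polynomial.order 1 (char_poly (mat_adjoint (1\<^sub>m n - P) * (1\<^sub>m n - P)))
       = Polynomial.order 0 (char_poly (mat_adjoint P * P)) + Polynomial.order 1 (char_poly (mat_adjoint P * P))"
proof -
  let ?Pc = "map_mat complex_of_real P"
  have Pc: "?Pc \<in> carrier_mat n n" using P by simp
  have "?Pc * ?Pc = map_mat complex_of_real (P * P)" by (rule of_real_hom.mat_hom_mult[OF P P, symmetric])
  hence PPc: "?Pc * ?Pc = ?Pc" unfolding PP .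
  have Q: "1\<^sub>m n - P \<in> carrier_mat n n" by (rule minus_carrier_mat[OF P])
  have Qc: "map_mat complex_of_real (1\<^sub>m n - P) = 1\<^sub>m n - ?Pc" by (rule eq_matI) (use P in auto)
  note tP = real_transfer[OF P] and tQ = real_transfer[OF Q, unfolded Qc]
  show ?thesis using main_complex[OF Pc PPc] unfolding tP tQ by simp
qed

theorem theorem13:
  shows "(\<forall>(n::nat) (P::real mat).
            P \<in> carrier_mat n n \<longrightarrow> P * P = P \<longrightarrow>
            (let Q = 1\<^sub>m n - P;
                 r0 = eig_mult (mat_adjoint P * P) 0;
                 r1 = eig_mult (mat_adjoint P * P) 1
             in eig_mult (mat_adjoint Q * Q) 0 = n - r0 \<and>
                int (eig_mult (mat_adjoint Q * Q) 1) = 2 * int r0 + int r1 - int n))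
       \<and> (\<forall>(n::nat) (P::complex mat).
            P \<in> carrier_mat n n \<longrightarrow> P * P = P \<longrightarrow>
            (let Q = 1\<^sub>m n - P;
                 r0 = eig_mult (mat_adjoint P * P) 0;
                 r1 = eig_mult (mat_adjoint P * P) 1
             in eig_mult (mat_adjoint Q * Q) 0 = n - r0 \<and>
                int (eig_mult (mat_adjoint Q * Q) 1) = 2 * int r0 + int r1 - int n))"
proof (intro conjI allI impI)
  fix n :: nat and P :: "real mat"
  assume P: "P \<in> carrier_mat n n" and PP: "P * P = P"
  show "let Q = 1\<^sub>m n - P;
                 r0 = eig_mult (mat_adjoint P * P) 0;
                 r1 = eig_mult (mat_adjoint P * P) 1
             in eig_mult (mat_adjoint Q * Q) 0 = n - r0 \<and>
                int (eig_mult (mat_adjoint Q * Q) 1) = 2 * int r0 + int r1 - int n"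
    using main_real[OF P PP] unfolding Let_def eig_mult_def by arith
next
  fix n :: nat and P :: "complex mat"
  assume P: "P \<in> carrier_mat n n" and PP: "P * P = P"
  show "let Q = 1\<^sub>m n - P;
                 r0 = eig_mult (mat_adjoint P * P) 0;
                 r1 = eig_mult (mat_adjoint P * P) 1
             in eig_mult (mat_adjoint Q * Q) 0 = n - r0 \<and>
                int (eig_mult (mat_adjoint Q * Q) 1) = 2 * int r0 + int r1 - int n"
    using main_complex[OF P PP] unfolding Let_def eig_mult_def by arith
qed

end
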